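(* In the setting below (piecewise constant successive sleep modes (As3), finite $P_{\mathrm{max}}$), fix a target rate $R$ with $0<R\le R_{\mathrm{max}}$ and let $P^\star_{\mathrm{cons}}(N)$ be the minimum value of Problem (P) for frame length $N$ (other parameters fixed). For each feasible sleep mode $s\in\mathcal S_R$ define $$N_{\mathrm{a},s}=\mathrm{round}\!\left(\min\!\left(NR/\tilde R_s,\,N^+_{\mathrm{a},s}\right)\right),\qquad p_{n,s}=\begin{cases}(2^{RN/N_{\mathrm{a},s}}-1)\sigma^2,& n=0,\dots,N_{\mathrm{a},s}-1,\\ 0,&\text{otherwise,}\end{cases}$$ $$P_{\mathrm{cons},s}(N)=\frac{N_{\mathrm{a},s}}{N}\left(P_0+\gamma\sigma^{2\alpha}\left(2^{RN/N_{\mathrm{a},s}}-1\right)^{\alpha}\right)+\frac{E_{\mathrm{sleep}}((N-N_{\mathrm{a},s})T)}{NT}.$$ Then, as $N\to\infty$, $P^\star_{\mathrm{cons}}(N)=\min_{s\in\mathcal S_R}P_{\mathrm{cons},s}(N)+O(1/N)$; i.e. choosing the feasible mode $s$ with minimal $P_{\mathrm{cons},s}$ and the corresponding allocation is asymptotically optimal.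
   Context: Setting: fix $T>0$, $\sigma^2>0$, $P_{\mathrm{max}}\in(0,\infty)$, $\alpha\in(0,1]$, $\gamma>0$, $P_0\ge0$. (As3): there are sleep modes $s=0,1,\dots,S$ with start times $0=T_0\le T_1<\dots<T_S$, $T_{S+1}=+\infty$, and powers $P_0\ge P_1\ge\dots\ge P_S\ge0$; the sleep power is $P_{\mathrm{sleep}}(t)=P_s$ for $T_s<t\le T_{s+1}$, and $E_{\mathrm{sleep}}(t)=\int_0^tP_{\mathrm{sleep}}(t')dt'=\sum_{s'=0}^{s-1}P_{s'}(T_{s'+1}-T_{s'})+(t-T_s)P_s$ for $T_s<t\le T_{s+1}$ (and $E_{\mathrm{sleep}}(0)=0$). For an integer $N\ge1$, an allocation is $N_{\mathrm{a}}\in\{0,\dots,N\}$ with powers $p_0,\dots,p_{N_{\mathrm{a}}-1}\in[0,P_{\mathrm{max}}]$ ($p_n=0$ for $n\ge N_{\mathrm{a}}$); its consumed power is $P_{\mathrm{cons}}=\frac{N_{\mathrm{a}}}{N}P_0+\frac{\gamma}{N}\sum_{n=0}^{N_{\mathrm{a}}-1}p_n^{\alpha}+\frac{E_{\mathrm{sleep}}((N-N_{\mathrm{a}})T)}{NT}$. Problem (P): minimize $P_{\mathrm{cons}}$ subject to $\frac1N\sum_{n=0}^{N_{\mathrm{a}}-1}\log_2(1+p_n/\sigma^2)=R$. Definitions: $R_{\mathrm{max}}=\log_2(1+P_{\mathrm{max}}/\sigma^2)$; $N^+_{\mathrm{a},s}=N-\lfloor T_s/T\rfloor$ (largest number of active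 slots compatible with entering mode $s$); $\mathcal S_R=\{s\in\{0,\dots,S\}: NR/R_{\mathrm{max}}\le N^+_{\mathrm{a},s}\}$ (feasible sleep modes); $R_{\mathrm{a}}(s)$ is a minimizer over $x>0$ of $\frac{P_0-P_s+\gamma\sigma^{2\alpha}(2^x-1)^{\alpha}}{x}$ (with $R_{\mathrm{a}}(s)=0$ if $P_0=P_s,\alpha=1$); $\tilde R_s=\min(R_{\mathrm{a}}(s),R_{\mathrm{max}})$. $\mathrm{round}(\cdot)$ is rounding to the nearest integer. *)

theory Defs
  imports "HOL-Analysis.Analysis"
begin

text \<open>Sleep modes (As3): start times Tm 0 = 0, Tm 1, ..., Tm S (with Tm (S+1) = +infinity
  implicit) and powers Pw 0 \<ge> Pw 1 \<ge> ... \<ge> Pw S \<ge> 0.  Pw 0 is also the active power P_0.\<close>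

definition sleep_mode :: "(nat \<Rightarrow> real) \<Rightarrow> nat \<Rightarrow> real \<Rightarrow> nat" where
  "sleep_mode Tm S t = (GREATEST s. s \<le> S \<and> Tm s < t)"

definition E_sleep :: "(nat \<Rightarrow> real) \<Rightarrow> (nat \<Rightarrow> real) \<Rightarrow> nat \<Rightarrow> real \<Rightarrow> real" where
  "E_sleep Tm Pw S t =
     (if t \<le> 0 then 0
      else (let s = sleep_mode Tm S t in
              (\<Sum>s'<s. Pw s' * (Tm (Suc s') - Tm s')) + (t - Tm s) * Pw s))"

definition P_cons ::
  "real \<Rightarrow> real \<Rightarrow> real \<Rightarrow> (nat \<Rightarrow> real) \<Rightarrow> (nat \<Rightarrow> real) \<Rightarrow> nat \<Rightarrow> nat \<Rightarrow> nat \<Rightarrow> (nat \<Rightarrow> real) \<Rightarrow> real" where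
  "P_cons T alpha gamma Tm Pw S N Na p =
     real Na / real N * Pw 0 + gamma / real N * (\<Sum>n<Na. p n powr alpha)
     + E_sleep Tm Pw S ((real N - real Na) * T) / (real N * T)"

definition feasible_alloc ::
  "real \<Rightarrow> real \<Rightarrow> real \<Rightarrow> nat \<Rightarrow> nat \<Rightarrow> (nat \<Rightarrow> real) \<Rightarrow> bool" where
  "feasible_alloc sigma2 Pmax R N Na p \<longleftrightarrow>
     Na \<le> N \<and> (\<forall>n<Na. 0 \<le> p n \<and> p n \<le> Pmax) \<and> (\<forall>n\<ge>Na. p n = 0) \<and>
     (1 / real N) * (\<Sum>n<Na. log 2 (1 + p n / sigma2)) = R"

definition P_star ::
  "real \<Rightarrow> real \<Rightarrow> real \<Rightarrow> real \<Rightarrow> real \<Rightarrow> (nat \<Rightarrow> real) \<Rightarrow> (nat \<Rightarrow> real) \<Rightarrow> nat \<Rightarrow> real \<Rightarrow> nat \<Rightarrow> real" where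
  "P_star T sigma2 Pmax alpha gamma Tm Pw S R N =
     Inf {P_cons T alpha gamma Tm Pw S N Na p | Na p. feasible_alloc sigma2 Pmax R N Na p}"

definition R_max :: "real \<Rightarrow> real \<Rightarrow> real" where
  "R_max sigma2 Pmax = log 2 (1 + Pmax / sigma2)"

definition N_plus :: "real \<Rightarrow> (nat \<Rightarrow> real) \<Rightarrow> nat \<Rightarrow> nat \<Rightarrow> real" where
  "N_plus T Tm N s = real N - real_of_int \<lfloor>Tm s / T\<rfloor>"

definition feasible_modes ::
  "real \<Rightarrow> real \<Rightarrow> real \<Rightarrow> (nat \<Rightarrow> real) \<Rightarrow> nat \<Rightarrow> real \<Rightarrow> nat \<Rightarrow> nat set" where
  "feasible_modes T sigma2 Pmax Tm S R N =
     {s. s \<le> S \<and> real N * R / R_max sigma2 Pmax \<le> N_plus T Tm N s}"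

text \<open>The objective whose minimiser over x > 0 defines R_a(s).\<close>
definition ra_obj :: "real \<Rightarrow> real \<Rightarrow> real \<Rightarrow> (nat \<Rightarrow> real) \<Rightarrow> nat \<Rightarrow> real \<Rightarrow> real" where
  "ra_obj sigma2 alpha gamma Pw s x =
     (Pw 0 - Pw s + gamma * sigma2 powr alpha * (2 powr x - 1) powr alpha) / x"

text \<open>N_{a,s} = round(min(N R / Rtilde_s, N^+_{a,s})), with N R / 0 read as +infinity.\<close>
definition N_a_s ::
  "real \<Rightarrow> real \<Rightarrow> real \<Rightarrow> (nat \<Rightarrow> real) \<Rightarrow> (nat \<Rightarrow> real) \<Rightarrow> real \<Rightarrow> nat \<Rightarrow> nat \<Rightarrow> nat" where
  "N_a_s T sigma2 Pmax Tm Ra R N s =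
     (let Rt = min (Ra s) (R_max sigma2 Pmax) in
      nat (round (if Rt = 0 then N_plus T Tm N s
                  else min (real N * R / Rt) (N_plus T Tm N s))))"

definition P_cons_s ::
  "real \<Rightarrow> real \<Rightarrow> real \<Rightarrow> real \<Rightarrow> real \<Rightarrow> (nat \<Rightarrow> real) \<Rightarrow> (nat \<Rightarrow> real) \<Rightarrow> nat
    \<Rightarrow> (nat \<Rightarrow> real) \<Rightarrow> real \<Rightarrow> nat \<Rightarrow> nat \<Rightarrow> real" where
  "P_cons_s T sigma2 Pmax alpha gamma Tm Pw S Ra R N s =
     (let Na = N_a_s T sigma2 Pmax Tm Ra R N s in
      real Na / real N *
        (Pw 0 + gamma * sigma2 powr alpha * (2 powr (R * real N / real Na) - 1) powr alpha)
      + E_sleep Tm Pw S ((real N - real Na) * T) / (real N * T))"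

end

theory Submission
  imports Defs
begin


lemma d2: "((\<lambda>x. 2 powr x) has_real_derivative (ln 2 * 2 powr x)) (at x)"
proof -
  have "((\<lambda>x. (2::real) powr x) has_real_derivative (2 powr x * (1 * ln 2 + 0 * x / 2))) (at x)"
    by (rule DERIV_powr) (auto intro!: derivative_eq_intros)
  thus ?thesis by (simp add: mult.commute)
qed

locale anal =
  fixes c g sg a :: real
  assumes c: "c \<ge> 0" and g: "g > 0" and sg: "sg > 0" and a: "0 < a" "a \<le> 1"
begin

definition F :: "real \<Rightarrow> real" where "F x = sg * (2 powr x - 1) powr a"
definition q :: "real \<Rightarrow> real" where "q x = c + g * F x"
definition dq :: "real \<Rightarrow> real" where
  "dq x = g * sg * a * ln 2 * 2 powr x * (2 powr x - 1) powr (a - 1)"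
definition ddq :: "real \<Rightarrow> real" where
  "ddq x = g * sg * a * (ln 2)^2 * 2 powr x * (2 powr x - 1) powr (a - 2) * (a * 2 powr x - 1)"
definition phi :: "real \<Rightarrow> real" where "phi x = x * dq x - q x"
definition h :: "real \<Rightarrow> real" where "h x = q x / x"

lemma u_pos: "x > 0 \<Longrightarrow> 2 powr x - 1 > (0::real)"
  by (simp add: powr_gt_zero) 

lemma DERIV_q: assumes "x > 0" shows "(q has_real_derivative dq x) (at x)"
proof -
  have u: "2 powr x - 1 > 0" using assms by (simp add: powr_gt_zero)
  have "((\<lambda>x. 2 powr x - 1) has_real_derivative (ln 2 * 2 powr x)) (at x)"
    using d2[of x] by (auto intro!: derivative_eq_intros)
  from DERIV_fun_powr[OF this u, of a]
  have "((\<lambda>x. (2 powr x - 1) powr a) has_real_derivative a * (2 powr x - 1) powr (a - 1) * (ln 2 * 2 powr x)) (at x)"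
    by simp
  then have "(q has_real_derivative (g * (sg * (a * (2 powr x - 1) powr (a - 1) * (ln 2 * 2 powr x))))) (at x)"
    unfolding q_def[abs_def] F_def using u by (auto intro!: derivative_eq_intros)
  thus ?thesis by (simp add: dq_def algebra_simps)
qed

lemma DERIV_dq: assumes "x > 0" shows "(dq has_real_derivative ddq x) (at x)"
proof -
  have u: "2 powr x - 1 > 0" using assms by (simp add: powr_gt_zero)
  have du: "((\<lambda>x. 2 powr x - 1) has_real_derivative (ln 2 * 2 powr x)) (at x)"
    using d2[of x] by (auto intro!: derivative_eq_intros)
  from DERIV_fun_powr[OF du u, of "a - 1"]
  have p: "((\<lambda>x. (2 powr x - 1) powr (a - 1)) has_real_derivative (a - 1) * (2 powr x - 1) powr (a - 2) * (ln 2 * 2 powr x)) (at x)"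
    by (simp add: diff_diff_eq)
  have "(dq has_real_derivative (g * sg * a * ln 2) * ((ln 2 * 2 powr x) * (2 powr x - 1) powr (a - 1)
          + 2 powr x * ((a - 1) * (2 powr x - 1) powr (a - 2) * (ln 2 * 2 powr x)))) (at x)"
    unfolding dq_def[abs_def] 
    by (rule derivative_eq_intros DERIV_cmult d2 p refl)+ (simp add: algebra_simps)
  moreover have "(2 powr x - 1) powr (a - 1) = (2 powr x - 1) powr (a - 2) * (2 powr x - 1)"
  proof -
    have "(2 powr x - 1) powr (a - 1) = (2 powr x - 1) powr ((a - 2) + 1)" by simp
    also have "\<dots> = (2 powr x - 1) powr (a - 2) * (2 powr x - 1) powr 1" by (rule powr_add)
    finally show ?thesis using u by simp
  qed
  ultimately show ?thesis unfolding ddq_def by (simp add: algebra_simps power2_eq_square)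
qed

lemma two_powr_eq: "(2::real) powr x = exp (x * ln 2)"
  by (simp add: powr_def mult.commute)

lemma lin_lt: fixes x :: real assumes "x > 0" shows "x * ln 2 < 2 powr x - 1"
proof -
  have "1 - (- (x * ln (2::real))) < exp (- (- (x * ln 2)))"
    using exp_minus_greater[of "-(x*ln (2::real))"] assms by simp
  thus ?thesis by (simp add: two_powr_eq)
qed

lemma powr_split: assumes "u > (0::real)" shows "u powr a = u powr (a - 1) * u"
proof -
  have "u powr a = u powr ((a - 1) + 1)" by simp
  also have "\<dots> = u powr (a - 1) * u powr 1" by (rule powr_add)
  finally show ?thesis using assms by simp
qed

lemma phi_explicit: assumes "x > 0"
  shows "phi x = g * sg * (2 powr x - 1) powr (a - 1) * (a * x * ln 2 * 2 powr x - (2 powr x - 1)) - c"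
  unfolding phi_def dq_def q_def F_def
  by (subst powr_split[OF u_pos[OF assms]]) (simp add: algebra_simps)

lemma phi_neg: assumes "x > 0" "a * 2 powr x \<le> 1" shows "phi x < 0"
proof -
  have "a * x * ln 2 * 2 powr x = x * ln 2 * (a * 2 powr x)" by simp
  also have "\<dots> \<le> x * ln 2" using assms by (simp add: mult_left_le)
  also have "\<dots> < 2 powr x - 1" by (rule lin_lt[OF assms(1)])
  finally have "a * x * ln 2 * 2 powr x - (2 powr x - 1) < 0" by simp
  moreover have up: "(2 powr x - 1) powr (a - 1) > 0" 
    using u_pos[OF assms(1)] assms(1) by (subst powr_gt_zero) simp
  moreover have "g * sg * (2 powr x - 1) powr (a - 1) > 0"
    using g sg up by simp
  ultimately have "g * sg * (2 powr x - 1) powr (a - 1) * (a * x * ln 2 * 2 powr x - (2 powr x - 1)) < 0"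
    by (simp add: mult_pos_neg)
  thus ?thesis using phi_explicit[OF assms(1)] c by simp
qed

lemma ddq_nonneg: assumes "x > 0" "a * 2 powr x \<ge> 1" shows "ddq x \<ge> 0"
  unfolding ddq_def using assms g sg a u_pos[OF assms(1)] by simp

lemma DERIV_phi: assumes "x > 0" shows "(phi has_real_derivative x * ddq x) (at x)"
proof -
  have "(phi has_real_derivative (1 * dq x + ddq x * x - dq x)) (at x)"
    unfolding phi_def[abs_def]
    by (intro DERIV_diff DERIV_mult DERIV_ident DERIV_q[OF assms] DERIV_dq[OF assms])
  thus ?thesis by (simp add: mult.commute)
qed

lemma DERIV_h: assumes "x > 0" shows "(h has_real_derivative phi x / x^2) (at x)"
proof -
  have "(h has_real_derivative (dq x * x - q x * 1) / (x * x)) (at x)"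
    unfolding h_def[abs_def]
    using DERIV_divide[OF DERIV_q[OF assms] DERIV_ident] assms by simp
  thus ?thesis by (simp add: phi_def power2_eq_square algebra_simps)
qed

definition reg :: "real \<Rightarrow> bool" where "reg x \<longleftrightarrow> x > 0 \<and> a * 2 powr x \<ge> 1"

lemma reg_mono: "reg x \<Longrightarrow> x \<le> y \<Longrightarrow> reg y"
  unfolding reg_def using a
  by (smt (verit) mult_left_mono powr_mono)

lemma phi_mono: assumes "reg x" "x \<le> y" shows "phi x \<le> phi y"
proof (rule DERIV_nonneg_imp_nondecreasing[OF assms(2)])
  fix z assume "x \<le> z" "z \<le> y"
  hence "reg z" using reg_mono assms by blast
  thus "\<exists>d. (phi has_real_derivative d) (at z) \<and> d \<ge> 0"
    using DERIV_phi ddq_nonneg unfolding reg_def by (intro exI[of _ "z * ddq z"]) auto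
qed

lemma dq_mono: assumes "reg x" "x \<le> y" shows "dq x \<le> dq y"
proof (rule DERIV_nonneg_imp_nondecreasing[OF assms(2)])
  fix z assume "x \<le> z" "z \<le> y"
  hence "reg z" using reg_mono assms by blast
  thus "\<exists>d. (dq has_real_derivative d) (at z) \<and> d \<ge> 0"
    using DERIV_dq ddq_nonneg unfolding reg_def by (intro exI[of _ "ddq z"]) auto
qed

lemma tangent_reg: assumes "reg x0" "reg r" shows "q r \<ge> q x0 + dq x0 * (r - x0)"
proof (cases "r = x0")
  case False
  show ?thesis
  proof (cases "r < x0")
    case True
    obtain z where z: "r < z" "z < x0" "q x0 - q r = (x0 - r) * dq z"
      using MVT2[OF True, of q dq] DERIV_q assms(2) unfolding reg_def by force
    have "dq z \<le> dq x0" using dq_mono[of z x0] reg_mono[OF assms(2)] z by auto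
    hence "(x0 - r) * dq z \<le> (x0 - r) * dq x0" using True by (simp add: mult_left_mono)
    thus ?thesis using z by (simp add: algebra_simps)
  next
    case False
    hence lt: "x0 < r" using \<open>r \<noteq> x0\<close> by simp
    obtain z where z: "x0 < z" "z < r" "q r - q x0 = (r - x0) * dq z"
      using MVT2[OF lt, of q dq] DERIV_q assms(1) unfolding reg_def by force
    have "dq x0 \<le> dq z" using dq_mono[of x0 z] assms(1) z by auto
    hence "(r - x0) * dq x0 \<le> (r - x0) * dq z" using lt by (simp add: mult_left_mono)
    thus ?thesis using z by (simp add: algebra_simps)
  qed
qed simp

lemma q0: "q 0 = c" unfolding q_def F_def by simp

lemma F_nonneg: "x \<ge> 0 \<Longrightarrow> F x \<ge> 0" unfolding F_def using sg by simp

lemma F_mono: assumes "0 \<le> x" "x \<le> y" shows "F x \<le> F y"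
proof -
  have "2 powr x - 1 \<ge> 0" using assms ge_one_powr_ge_zero by auto
  moreover have "2 powr x \<le> 2 powr y" using assms by simp
  ultimately show ?thesis unfolding F_def using sg a by (simp add: powr_mono2)
qed


lemma tangent_general:
  assumes "reg x0" "phi x0 \<ge> 0"
    and H: "\<And>r. r > 0 \<Longrightarrow> \<not> reg r \<Longrightarrow> \<exists>i. reg i \<and> r \<le> i \<and> h i \<le> h r"
    and r: "r \<ge> 0"
  shows "(q x0 - dq x0 * x0) + dq x0 * r \<le> q r"
proof -
  have lam: "q x0 - dq x0 * x0 \<le> 0" using assms(2) unfolding phi_def by (simp add: mult.commute)
  show ?thesis
  proof (cases "r = 0")
    case True thus ?thesis using lam q0 c by simp
  next
    case False
    hence rp: "r > 0" using r by simp
    show ?thesis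
    proof (cases "reg r")
      case True thus ?thesis using tangent_reg[OF assms(1) True] by (simp add: algebra_simps)
    next
      case False
      obtain i where i: "reg i" "r \<le> i" "h i \<le> h r" using H[OF rp False] by blast
      have ip: "i > 0" using i unfolding reg_def by simp
      have ti: "(q x0 - dq x0 * x0) + dq x0 * i \<le> q i"
        using tangent_reg[OF assms(1) i(1)] by (simp add: algebra_simps)
      have qi: "q i = i * h i" and qr: "q r = r * h r" using ip rp unfolding h_def by auto
      have "r * h i \<le> r * h r" using i(3) rp by simp
      moreover have "(q x0 - dq x0 * x0) + dq x0 * r \<le> r * h i"
      proof (cases "h i \<ge> dq x0")
        case True
        hence "0 \<le> r * (h i - dq x0)" using rp by simp
        thus ?thesis using lam by (simp add: algebra_simps)
      next
        case False
        hence "i * (h i - dq x0) \<le> r * (h i - dq x0)" using i(2) by (simp add: mult_right_mono_neg)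
        thus ?thesis using ti qi by (simp add: algebra_simps)
      qed
      ultimately show ?thesis using qr by simp
    qed
  qed
qed

lemma deg_phi: assumes "a = 1" "c = 0" "x > 0" shows "phi x \<ge> 0"
proof -
  have "1 - x * ln 2 \<le> exp (- (x * ln (2::real)))" using exp_minus_ge by blast
  hence "(1 - x * ln 2) * exp (x * ln 2) \<le> exp (- (x * ln 2)) * exp (x * ln (2::real))"
    by (simp add: mult_right_mono)
  hence "(1 - x * ln 2) * exp (x * ln 2) \<le> 1" by (simp add: exp_minus_inverse mult.commute)
  hence "2 powr x - 1 \<le> x * ln 2 * 2 powr x" by (simp add: two_powr_eq algebra_simps)
  moreover have "(2 powr x - 1) powr (a - 1) = 1" using assms u_pos[OF assms(3)] by simp
  ultimately show ?thesis using phi_explicit[OF assms(3)] assms g sg by simp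
qed

lemma deg_reg: assumes "a = 1" "x > 0" shows "reg x"
  unfolding reg_def using assms ge_one_powr_ge_zero[of 2 x] by simp

lemma q_nonneg: "x \<ge> 0 \<Longrightarrow> q x \<ge> 0" unfolding q_def using F_nonneg c g by simp

lemma q_mono: "0 \<le> x \<Longrightarrow> x \<le> y \<Longrightarrow> q x \<le> q y" unfolding q_def using F_mono g by simp

definition Dq :: "real \<Rightarrow> real \<Rightarrow> real" where
  "Dq R0 B = g * sg * a * ln 2 * 2 powr B * (2 powr R0 - 1) powr (a - 1)"

lemma dq_le: assumes "R0 > 0" "R0 \<le> z" "z \<le> B" shows "dq z \<le> Dq R0 B"
proof -
  have u0: "2 powr R0 - 1 > 0" using u_pos[OF assms(1)] .
  have "2 powr R0 \<le> 2 powr z" using assms by simp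
  hence p1: "(2 powr z - 1) powr (a - 1) \<le> (2 powr R0 - 1) powr (a - 1)"
    using powr_mono2'[of "a - 1" "2 powr R0 - 1" "2 powr z - 1"] a u0 by simp
  have p2: "2 powr z \<le> 2 powr B" using assms by simp
  have k: "g * sg * a * ln 2 \<ge> 0" using g sg a by simp
  have "dq z = (g * sg * a * ln 2) * (2 powr z * (2 powr z - 1) powr (a - 1))"
    unfolding dq_def by (simp add: algebra_simps)
  also have "\<dots> \<le> (g * sg * a * ln 2) * (2 powr B * (2 powr R0 - 1) powr (a - 1))"
    by (intro mult_left_mono mult_mono p1 p2 k) auto
  finally show ?thesis unfolding Dq_def by (simp add: algebra_simps)
qed

lemma Dq_nonneg: "Dq R0 B \<ge> 0" unfolding Dq_def using g sg a by simp

lemma round_bound: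
  assumes K: "K > 0" and A: "A > 0" and R0: "R0 > 0"
    and y: "y1 > 0" "y2 > 0" "\<bar>y1 - y2\<bar> \<le> 1/2"
    and x2: "K / y2 \<le> A" "R0 \<le> K / y2" and x1: "K / y1 \<le> 2 * A"
  shows "y1 * q (K / y1) \<le> y2 * q (K / y2) + ((c + g * F A) / 2 + A * Dq R0 (2 * A))"
proof (cases "y1 \<ge> y2")
  case True
  have "K / y1 \<le> K / y2" using True K y by (simp add: frac_le)
  hence "q (K / y1) \<le> q (K / y2)" using K y by (intro q_mono) auto
  hence "y1 * q (K / y1) \<le> y1 * q (K / y2)" using y by (simp add: mult_left_mono)
  also have "\<dots> = y2 * q (K / y2) + (y1 - y2) * q (K / y2)" by (simp add: algebra_simps)
  also have "(y1 - y2) * q (K / y2) \<le> (1/2) * q A"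
    using y True x2 K q_nonneg[of "K/y2"] q_mono[of "K/y2" A]
    by (intro mult_mono) auto
  finally have "y1 * q (K / y1) \<le> y2 * q (K / y2) + (c + g * F A) / 2" by (simp add: q_def)
  moreover have "0 \<le> A * Dq R0 (2 * A)" using A Dq_nonneg by simp
  ultimately show ?thesis by simp
next
  case False
  let ?x1 = "K / y1" and ?x2 = "K / y2"
  have lt: "?x2 < ?x1" using False K y by (simp add: frac_less2)
  have "y1 * q ?x1 \<le> y2 * q ?x1" using False q_nonneg[of ?x1] K y by (simp add: mult_right_mono)
  obtain z where z: "?x2 < z" "z < ?x1" "q ?x1 - q ?x2 = (?x1 - ?x2) * dq z"
    using MVT2[OF lt, of q dq] DERIV_q R0 x2 by force
  have "dq z \<le> Dq R0 (2 * A)" using dq_le[of R0 z "2*A"] R0 x2 x1 z by simp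
  hence "q ?x1 - q ?x2 \<le> (?x1 - ?x2) * Dq R0 (2 * A)" using z lt by (simp add: mult_left_mono)
  moreover have "y2 * (?x1 - ?x2) \<le> A"
  proof -
    have "y2 * (?x1 - ?x2) = K * (y2 - y1) / y1" using y by (simp add: field_simps)
    also have "\<dots> \<le> K * (1/2) / y1"
      using y K abs_le_D2[OF y(3)] by (intro divide_right_mono mult_left_mono) auto
    also have "\<dots> = ?x1 / 2" by simp
    finally show ?thesis using x1 by simp
  qed
  ultimately have "y2 * q ?x1 - y2 * q ?x2 \<le> A * Dq R0 (2 * A)"
  proof -
    assume h1: "q ?x1 - q ?x2 \<le> (?x1 - ?x2) * Dq R0 (2 * A)" and h2: "y2 * (?x1 - ?x2) \<le> A"
    have "y2 * q ?x1 - y2 * q ?x2 = y2 * (q ?x1 - q ?x2)" by (simp add: algebra_simps)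
    also have "\<dots> \<le> y2 * ((?x1 - ?x2) * Dq R0 (2 * A))" using h1 y by (simp add: mult_left_mono)
    also have "\<dots> = (y2 * (?x1 - ?x2)) * Dq R0 (2 * A)" by simp
    also have "\<dots> \<le> A * Dq R0 (2 * A)" using h2 Dq_nonneg by (simp add: mult_right_mono)
    finally show ?thesis .
  qed
  moreover have "0 \<le> (c + g * F A) / 2" using c g F_nonneg[of A] A by simp
  ultimately show ?thesis using \<open>y1 * q ?x1 \<le> y2 * q ?x1\<close> by linarith
qed

end

locale anal_nd = anal +
  fixes Ra :: real
  assumes Ra_pos: "Ra > 0" and Ra_min: "\<And>x. x > 0 \<Longrightarrow> h Ra \<le> h x"
begin

lemma phi_Ra: "phi Ra = 0"
proof -
  have "phi Ra / Ra^2 = 0"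
    by (rule DERIV_local_min[OF DERIV_h[OF Ra_pos] Ra_pos]) (auto intro!: Ra_min)
  thus ?thesis using Ra_pos by simp
qed

lemma reg_Ra: "reg Ra"
  using phi_neg[OF Ra_pos] phi_Ra Ra_pos unfolding reg_def by force

lemma phi_ge: "x \<ge> Ra \<Longrightarrow> phi x \<ge> 0"
  using phi_mono[OF reg_Ra] phi_Ra by force

lemma phi_le: assumes "0 < x" "x \<le> Ra" shows "phi x \<le> 0"
proof (cases "reg x")
  case True thus ?thesis using phi_mono[OF True assms(2)] phi_Ra by simp
next
  case False thus ?thesis using phi_neg[OF assms(1)] assms(1) unfolding reg_def by force
qed

lemma h_anti: assumes "0 < x" "x \<le> y" "y \<le> Ra" shows "h y \<le> h x"
proof (rule DERIV_nonpos_imp_nonincreasing[OF assms(2)])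
  fix z assume z: "x \<le> z" "z \<le> y"
  hence "z > 0" using assms by simp
  moreover have "phi z / z^2 \<le> 0" using phi_le[of z] z assms by (simp add: divide_nonpos_pos)
  ultimately show "\<exists>d. (h has_real_derivative d) (at z) \<and> d \<le> 0" using DERIV_h by blast
qed

lemma tangent_nd: assumes "x0 \<ge> Ra" "r \<ge> 0"
  shows "(q x0 - dq x0 * x0) + dq x0 * r \<le> q r"
proof (rule tangent_general[OF reg_mono[OF reg_Ra assms(1)] phi_ge[OF assms(1)] _ assms(2)])
  fix r assume "r > 0" "\<not> reg r"
  hence "r \<le> Ra" using reg_mono[of Ra r] reg_Ra by force
  thus "\<exists>i. reg i \<and> r \<le> i \<and> h i \<le> h r" using reg_Ra Ra_min[OF \<open>r > 0\<close>] by blast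
qed

lemma origin_Ra: assumes "r \<ge> 0" shows "0 + h Ra * r \<le> q r"
proof (cases "r = 0")
  case True thus ?thesis using q0 c by simp
next
  case False
  hence "r > 0" using assms by simp
  hence "h Ra * r \<le> h r * r" using Ra_min by (simp add: mult_right_mono)
  thus ?thesis using \<open>r > 0\<close> unfolding h_def by simp
qed

lemma origin_A: assumes "0 < A" "A < Ra" "0 \<le> r" "r \<le> A" shows "0 + h A * r \<le> q r"
proof (cases "r = 0")
  case True thus ?thesis using q0 c by simp
next
  case False
  hence "r > 0" using assms by simp
  hence "h A * r \<le> h r * r" using h_anti[of r A] assms by (simp add: mult_right_mono)
  thus ?thesis using \<open>r > 0\<close> unfolding h_def by simp
qed

end


definition Lfun :: "(nat \<Rightarrow> real) \<Rightarrow> (nat \<Rightarrow> real) \<Rightarrow> nat \<Rightarrow> real \<Rightarrow> real" where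
  "Lfun Tm Pw s t = (\<Sum>s'<s. Pw s' * (Tm (Suc s') - Tm s')) + (t - Tm s) * Pw s"

lemma Lfun_Suc: "Lfun Tm Pw (Suc s) t = Lfun Tm Pw s t + (t - Tm (Suc s)) * (Pw (Suc s) - Pw s)"
  unfolding Lfun_def by (simp add: algebra_simps)

lemma Lfun_lin: "Lfun Tm Pw s t = Lfun Tm Pw s 0 + t * Pw s"
  unfolding Lfun_def by (simp add: algebra_simps)

locale sleep =
  fixes Tm Pw :: "nat \<Rightarrow> real" and S :: nat
  assumes Tm0: "Tm 0 = 0" and Tm1: "S \<ge> 1 \<Longrightarrow> Tm 0 \<le> Tm 1"
    and Tm_mono: "\<And>s. 1 \<le> s \<Longrightarrow> s < S \<Longrightarrow> Tm s < Tm (Suc s)"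
    and Pw_mono: "\<And>s. s < S \<Longrightarrow> Pw (Suc s) \<le> Pw s" and PwS: "Pw S \<ge> 0"
begin

lemma Tm_step: "s < S \<Longrightarrow> Tm s \<le> Tm (Suc s)"
  using Tm1 Tm_mono[of s] by (cases s) (auto simp: less_imp_le)

lemma Tm_le: "s \<le> s' \<Longrightarrow> s' \<le> S \<Longrightarrow> Tm s \<le> Tm s'"
proof (induction s' rule: nat_induct)
  case 0 thus ?case by simp
next
  case (Suc n)
  show ?case
  proof (cases "s = Suc n")
    case False
    hence "Tm s \<le> Tm n" using Suc by simp
    thus ?thesis using Tm_step[of n] Suc by simp
  qed simp
qed

lemma Tm_nonneg: "s \<le> S \<Longrightarrow> Tm s \<ge> 0"
  using Tm_le[of 0 s] Tm0 by simp

lemma Pw_le: "s \<le> s' \<Longrightarrow> s' \<le> S \<Longrightarrow> Pw s' \<le> Pw s"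
proof (induction s' rule: nat_induct)
  case 0 thus ?case by simp
next
  case (Suc n)
  show ?case
  proof (cases "s = Suc n")
    case False
    hence "Pw n \<le> Pw s" using Suc by simp
    thus ?thesis using Pw_mono[of n] Suc by simp
  qed simp
qed

lemma Pw_nonneg: "s \<le> S \<Longrightarrow> Pw s \<ge> 0"
  using Pw_le[of s S] PwS by simp

abbreviation "md t \<equiv> sleep_mode Tm S t"

lemma md_props: assumes "t > 0"
  shows "md t \<le> S" "Tm (md t) < t" "\<And>s'. s' \<le> S \<Longrightarrow> Tm s' < t \<Longrightarrow> s' \<le> md t"
proof -
  have P0: "0 \<le> S \<and> Tm 0 < t" using assms Tm0 by simp
  have b: "\<And>y. y \<le> S \<and> Tm y < t \<Longrightarrow> y \<le> S" by simp
  have "md t \<le> S \<and> Tm (md t) < t"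
    unfolding sleep_mode_def
    by (rule GreatestI_nat[where P="\<lambda>y. y \<le> S \<and> Tm y < t" and k=0 and b=S]) (use P0 in auto)
  thus "md t \<le> S" "Tm (md t) < t" by auto
  fix s' assume "s' \<le> S" "Tm s' < t"
  thus "s' \<le> md t" unfolding sleep_mode_def by (intro Greatest_le_nat[of _ _ S]) auto
qed

lemma E_eq: "t > 0 \<Longrightarrow> E_sleep Tm Pw S t = Lfun Tm Pw (md t) t"
  unfolding E_sleep_def Lfun_def by (simp add: Let_def)

lemma E_le_L: assumes "s \<le> S" "t \<ge> 0" shows "E_sleep Tm Pw S t \<le> Lfun Tm Pw s t"
proof (cases "t = 0")
  case True
  have "s \<le> S \<Longrightarrow> Lfun Tm Pw s 0 \<ge> 0" for s
  proof (induction s)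
    case 0 thus ?case by (simp add: Lfun_def Tm0)
  next
    case (Suc n)
    have "(0 - Tm (Suc n)) * (Pw (Suc n) - Pw n) \<ge> 0"
      using Tm_nonneg[of "Suc n"] Pw_mono[of n] Suc.prems by (intro mult_nonpos_nonpos) auto
    thus ?case using Suc by (simp add: Lfun_Suc)
  qed
  thus ?thesis using True assms by (simp add: E_sleep_def)
next
  case False
  hence tp: "t > 0" using assms by simp
  let ?m = "md t"
  note mp = md_props[OF tp]
  have up: "?m + k \<le> S \<Longrightarrow> Lfun Tm Pw ?m t \<le> Lfun Tm Pw (?m + k) t" for k
  proof (induction k)
    case (Suc k)
    have "Tm (Suc (?m + k)) \<ge> t"
    proof (rule ccontr)
      assume "\<not> ?thesis"
      hence "Suc (?m + k) \<le> ?m" using mp(3)[of "Suc (?m+k)"] Suc.prems by simp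
      thus False by simp
    qed
    hence "(t - Tm (Suc (?m + k))) * (Pw (Suc (?m + k)) - Pw (?m + k)) \<ge> 0"
      using Pw_mono[of "?m + k"] Suc.prems by (intro mult_nonpos_nonpos) auto
    thus ?case using Suc by (simp add: Lfun_Suc)
  qed simp
  have down: "k \<le> ?m \<Longrightarrow> Lfun Tm Pw ?m t \<le> Lfun Tm Pw (?m - k) t" for k
  proof (induction k)
    case (Suc k)
    let ?j = "?m - Suc k"
    have jm: "Suc ?j = ?m - k" using Suc.prems by simp
    have "Tm (Suc ?j) \<le> Tm ?m" using Tm_le[of "Suc ?j" ?m] mp(1) Suc.prems by simp
    hence "Tm (Suc ?j) < t" using mp(2) by simp
    hence "(t - Tm (Suc ?j)) * (Pw (Suc ?j) - Pw ?j) \<le> 0"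
      using Pw_mono[of ?j] Suc.prems mp(1) by (intro mult_nonneg_nonpos) auto
    hence "Lfun Tm Pw (?m - k) t \<le> Lfun Tm Pw ?j t" using Lfun_Suc[of Tm Pw ?j t] jm by simp
    thus ?case using Suc by simp
  qed simp
  have "Lfun Tm Pw ?m t \<le> Lfun Tm Pw s t"
  proof (cases "s \<ge> ?m")
    case True thus ?thesis using up[of "s - ?m"] assms by simp
  next
    case False thus ?thesis using down[of "?m - s"] by simp
  qed
  thus ?thesis using E_eq[OF tp] by simp
qed

lemma E_nonneg: "E_sleep Tm Pw S t \<ge> 0"
proof (cases "t > 0")
  case True
  note mp = md_props[OF True]
  have "(\<Sum>s'<md t. Pw s' * (Tm (Suc s') - Tm s')) \<ge> 0"
    using mp(1) by (intro sum_nonneg mult_nonneg_nonneg Pw_nonneg) (auto simp: Tm_step)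
  moreover have "(t - Tm (md t)) * Pw (md t) \<ge> 0" using mp Pw_nonneg by simp
  ultimately show ?thesis using E_eq[OF True] unfolding Lfun_def by simp
qed (simp add: E_sleep_def)

lemma E_mono: assumes "t1 \<le> t2" shows "E_sleep Tm Pw S t1 \<le> E_sleep Tm Pw S t2"
proof (cases "t1 > 0")
  case True
  hence t2: "t2 > 0" using assms by simp
  have "E_sleep Tm Pw S t1 \<le> Lfun Tm Pw (md t2) t1"
    using E_le_L[of "md t2" t1] md_props(1)[OF t2] True by simp
  also have "\<dots> \<le> Lfun Tm Pw (md t2) t2"
    using Lfun_lin[of Tm Pw "md t2" t1] Lfun_lin[of Tm Pw "md t2" t2] assms
      Pw_nonneg[OF md_props(1)[OF t2]] by (simp add: mult_right_mono)
  finally show ?thesis using E_eq[OF t2] by simp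
next
  case False thus ?thesis using E_nonneg[of t2] by (simp add: E_sleep_def)
qed

end


lemma key_sum:
  fixes f :: "real \<Rightarrow> real"
  assumes line: "\<And>x. 0 \<le> x \<Longrightarrow> x \<le> A \<Longrightarrow> lam + mu * x \<le> f x"
    and r: "\<And>n. n < Na \<Longrightarrow> 0 \<le> r n \<and> r n \<le> A"
    and sum: "(\<Sum>n<Na. r n) = K" and m: "m > 0" and lm: "lam * m \<le> lam * real Na"
  shows "m * (lam + mu * (K / m)) \<le> (\<Sum>n<Na. f (r n))"
proof -
  have "m * (lam + mu * (K / m)) = lam * m + mu * K" using m by (simp add: field_simps)
  also have "\<dots> \<le> lam * real Na + mu * K" using lm by simp
  also have "\<dots> = (\<Sum>n<Na. lam + mu * r n)" using sum[symmetric] by (simp add: sum.distrib sum_distrib_left)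
  also have "\<dots> \<le> (\<Sum>n<Na. f (r n))" using line r by (intro sum_mono) auto
  finally show ?thesis .
qed

locale mainl = sleep +
  fixes T sigma2 Pmax alpha gamma R :: real and Ra :: "nat \<Rightarrow> real"
  assumes T_pos: "T > 0" and sigma2_pos: "sigma2 > 0" and Pmax_pos: "Pmax > 0"
    and alpha: "0 < alpha" "alpha \<le> 1" and gamma_pos: "gamma > 0"
    and Ra_def: "\<And>s. s \<le> S \<Longrightarrow>
        (if Pw 0 = Pw s \<and> alpha = 1 then Ra s = 0
         else Ra s > 0 \<and> (\<forall>x>0. ra_obj sigma2 alpha gamma Pw s (Ra s) \<le> ra_obj sigma2 alpha gamma Pw s x))"
    and R: "0 < R" "R \<le> R_max sigma2 Pmax"
begin

definition "A = R_max sigma2 Pmax"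
definition "sg = sigma2 powr alpha"
definition "cs s = Pw 0 - Pw s"
definition "qs s = anal.q (cs s) gamma sg alpha"
definition "Rt s = min (Ra s) A"
definition "Np N s = N_plus T Tm N s"
definition "ms N s = (if Rt s = 0 then Np N s else min (real N * R / Rt s) (Np N s))"

lemma A_pos: "A > 0"
proof -
  have "Pmax / sigma2 > 0" using sigma2_pos Pmax_pos by simp
  thus ?thesis unfolding A_def R_max_def by simp
qed

lemma A_exp: "2 powr A = 1 + Pmax / sigma2"
proof -
  have "Pmax / sigma2 > 0" using sigma2_pos Pmax_pos by simp
  thus ?thesis unfolding A_def R_max_def by (simp add: powr_log_cancel)
qed

lemma RA: "R \<le> A" using R unfolding A_def by simp

lemma sg_pos: "sg > 0" unfolding sg_def using sigma2_pos by simp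

lemma anal_s: "s \<le> S \<Longrightarrow> anal (cs s) gamma sg alpha"
  unfolding anal_def cs_def using Pw_le[of 0 s] gamma_pos sg_pos alpha by simp

lemma h_eq: assumes "s \<le> S" shows "anal.h (cs s) gamma sg alpha x = ra_obj sigma2 alpha gamma Pw s x"
proof -
  interpret an: anal "cs s" gamma sg alpha by (rule anal_s[OF assms])
  show ?thesis unfolding an.h_def an.q_def an.F_def unfolding ra_obj_def cs_def sg_def by (simp add: algebra_simps)
qed

lemma nd_s: assumes "s \<le> S" "\<not> (Pw 0 = Pw s \<and> alpha = 1)"
  shows "anal_nd (cs s) gamma sg alpha (Ra s)"
  using Ra_def[OF assms(1)] assms(2) anal_s[OF assms(1)]
  unfolding anal_nd_def anal_nd_axioms_def h_eq[OF assms(1)] by simp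

lemma Rt_zero: assumes "s \<le> S" shows "Rt s = 0 \<longleftrightarrow> (Pw 0 = Pw s \<and> alpha = 1)"
  using Ra_def[OF assms] A_pos unfolding Rt_def by (auto split: if_splits)

lemma Rt_pos: "s \<le> S \<Longrightarrow> Rt s \<noteq> 0 \<Longrightarrow> Rt s > 0"
  using Ra_def[of s] A_pos unfolding Rt_def by (auto split: if_splits)

lemma Rt_le: "Rt s \<le> A" unfolding Rt_def by simp

lemma Np_le: "s \<le> S \<Longrightarrow> Np N s \<le> real N"
  unfolding Np_def N_plus_def using Tm_nonneg[of s] T_pos by simp

lemma ms_props:
  assumes s: "s \<le> S" and N: "N > 0" and feas: "real N * R / A \<le> Np N s"
  shows "real N * R / A \<le> ms N s" "ms N s \<le> Np N s" "ms N s > 0"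
proof -
  have K: "real N * R > 0" using N R by simp
  have "real N * R / A \<le> ms N s"
  proof (cases "Rt s = 0")
    case False
    have "real N * R / A \<le> real N * R / Rt s"
      using Rt_pos[OF s False] Rt_le[of s] K A_pos by (intro divide_left_mono) (auto intro: mult_pos_pos)
    thus ?thesis using feas False unfolding ms_def by simp
  qed (use feas in \<open>simp add: ms_def\<close>)
  moreover have "real N * R / A > 0" using K A_pos by simp
  ultimately show "real N * R / A \<le> ms N s" "ms N s > 0" by auto
  show "ms N s \<le> Np N s" unfolding ms_def by simp
qed

lemma line_ex:
  assumes s: "s \<le> S" and N: "N > 0" and feas: "real N * R / A \<le> Np N s"
  shows "\<exists>lam mu. (\<forall>x. 0 \<le> x \<longrightarrow> x \<le> A \<longrightarrow> lam + mu * x \<le> qs s x)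
     \<and> lam + mu * (real N * R / ms N s) = qs s (real N * R / ms N s)
     \<and> (lam = 0 \<or> (lam \<le> 0 \<and> ms N s = Np N s))"
proof -
  interpret an: anal "cs s" gamma sg alpha by (rule anal_s[OF s])
  define K where "K = real N * R"
  have K: "K > 0" using N R unfolding K_def by simp
  have Np: "Np N s > 0" using feas K A_pos unfolding K_def by (smt (verit) divide_pos_pos)
  define x0 where "x0 = K / Np N s"
  have x0: "x0 > 0" "x0 \<le> A" using K Np feas A_pos unfolding x0_def K_def
    by (auto simp: field_simps)
  show ?thesis
  proof (cases "Pw 0 = Pw s \<and> alpha = 1")
    case True
    hence ms: "ms N s = Np N s" using Rt_zero[OF s] unfolding ms_def by simp
    have c0: "cs s = 0" using True unfolding cs_def by simp
    have reg: "an.reg x0" using an.deg_reg True x0 by simp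
    have ph: "an.phi x0 \<ge> 0" using an.deg_phi[of x0] True c0 x0 by simp
    have line: "\<forall>x. 0 \<le> x \<longrightarrow> x \<le> A \<longrightarrow> (an.q x0 - an.dq x0 * x0) + an.dq x0 * x \<le> qs s x"
      using an.tangent_general[OF reg ph] an.deg_reg True unfolding qs_def by blast
    have lam: "an.q x0 - an.dq x0 * x0 \<le> 0" using ph unfolding an.phi_def by (simp add: mult.commute)
    show ?thesis
      by (rule exI[of _ "an.q x0 - an.dq x0 * x0"], rule exI[of _ "an.dq x0"])
        (use line lam ms in \<open>simp add: qs_def x0_def K_def\<close>)
  next
    case False
    interpret nd: anal_nd "cs s" gamma sg alpha "Ra s" by (rule nd_s[OF s False])
    have Rtnz: "Rt s \<noteq> 0" using Rt_zero[OF s] False by simp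
    show ?thesis
    proof (cases "Ra s \<le> A")
      case RaA: True
      hence Rt: "Rt s = Ra s" unfolding Rt_def by simp
      show ?thesis
      proof (cases "K / Ra s \<le> Np N s")
        case True
        hence ms: "ms N s = K / Ra s" using Rt Rtnz unfolding ms_def K_def by simp
        have xs: "real N * R / ms N s = Ra s" using ms K nd.Ra_pos N R unfolding K_def by simp
        have "an.h (Ra s) * Ra s = an.q (Ra s)" unfolding an.h_def using nd.Ra_pos by simp
        thus ?thesis using nd.origin_Ra xs unfolding qs_def
          by (intro exI[of _ 0] exI[of _ "an.h (Ra s)"]) (auto simp: mult.commute)
      next
        case False
        hence ms: "ms N s = Np N s" using Rt Rtnz unfolding ms_def K_def by simp
        have "Ra s < x0" using False nd.Ra_pos Np unfolding x0_def by (simp add: field_simps)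
        hence line: "\<forall>x. 0 \<le> x \<longrightarrow> x \<le> A \<longrightarrow> (an.q x0 - an.dq x0 * x0) + an.dq x0 * x \<le> qs s x"
          using nd.tangent_nd[of x0] unfolding qs_def by simp
        have lam: "an.q x0 - an.dq x0 * x0 \<le> 0"
          using nd.phi_ge[of x0] \<open>Ra s < x0\<close> unfolding an.phi_def by (simp add: mult.commute)
        show ?thesis
          by (rule exI[of _ "an.q x0 - an.dq x0 * x0"], rule exI[of _ "an.dq x0"])
            (use line lam ms in \<open>simp add: qs_def x0_def K_def\<close>)
      qed
    next
      case False
      hence Rt: "Rt s = A" unfolding Rt_def by simp
      have ms: "ms N s = K / A" using Rt Rtnz feas unfolding ms_def K_def by simp
      have xs: "real N * R / ms N s = A" using ms K A_pos N R unfolding K_def by simp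
      have "an.h A * A = an.q A" unfolding an.h_def using A_pos by simp
      thus ?thesis using nd.origin_A[OF A_pos] False xs unfolding qs_def
        by (intro exI[of _ 0] exI[of _ "an.h A"]) (auto simp: mult.commute)
    qed
  qed
qed

end


context mainl begin

definition "Fx x = sg * (2 powr x - 1) powr alpha"
definition "C0 = (Pw 0 + gamma * Fx A) / 2 + A * (gamma * sg * alpha * ln 2 * 2 powr (2 * A) * (2 powr R - 1) powr (alpha - 1))"
definition "C2 = Pw 0 + gamma * Fx (2 * A)"

lemma qs_eq: assumes "s \<le> S" shows "qs s x = cs s + gamma * Fx x"
proof -
  interpret an: anal "cs s" gamma sg alpha by (rule anal_s[OF assms])
  show ?thesis unfolding qs_def an.q_def an.F_def Fx_def ..
qed

lemma Fx_nonneg: "x \<ge> 0 \<Longrightarrow> Fx x \<ge> 0"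
  unfolding Fx_def using sg_pos by simp

lemma Fx_mono: assumes "0 \<le> x" "x \<le> y" shows "Fx x \<le> Fx y"
proof -
  interpret an: anal "cs 0" gamma sg alpha by (rule anal_s) simp
  show ?thesis using an.F_mono[OF assms] unfolding an.F_def Fx_def .
qed

lemma Pw0_nonneg: "Pw 0 \<ge> 0" using Pw_nonneg[of 0] by simp

lemma fm_finite: "finite (feasible_modes T sigma2 Pmax Tm S R N)"
  unfolding feasible_modes_def by simp

lemma fm_0: "0 \<in> feasible_modes T sigma2 Pmax Tm S R N"
proof -
  have "R * real N \<le> A * real N" using mult_right_mono[OF RA, of "real N"] by simp
  hence "real N * R / A \<le> real N" using A_pos by (simp add: field_simps)
  thus ?thesis unfolding feasible_modes_def N_plus_def A_def[symmetric] using Tm0 by simp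
qed

lemma fm_iff: "s \<in> feasible_modes T sigma2 Pmax Tm S R N \<longleftrightarrow> s \<le> S \<and> real N * R / A \<le> Np N s"
  unfolding feasible_modes_def Np_def A_def by simp

lemma Nas_eq: "N_a_s T sigma2 Pmax Tm Ra R N s = nat (round (ms N s))"
  unfolding N_a_s_def ms_def Rt_def Np_def A_def by (simp add: Let_def)

lemma Pcons_s_eq: "P_cons_s T sigma2 Pmax alpha gamma Tm Pw S Ra R N s =
   (let Na = nat (round (ms N s)) in real Na / real N * (Pw 0 + gamma * Fx (R * real N / real Na))
      + E_sleep Tm Pw S ((real N - real Na) * T) / (real N * T))"
  unfolding P_cons_s_def Nas_eq Fx_def sg_def by (simp add: Let_def algebra_simps)

lemma nas_props:
  assumes s: "s \<le> S" and N: "N > 0" and feas: "real N * R / A \<le> Np N s" and NR: "real N * R \<ge> A"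
  defines "y \<equiv> real (nat (round (ms N s)))"
  shows "y \<ge> 1" "\<bar>y - ms N s\<bar> \<le> 1/2" "nat (round (ms N s)) \<le> N" "real N * R / y \<le> 2 * A"
    "y \<ge> ms N s - 1/2"
proof -
  note mp = ms_props[OF s N feas]
  have half: "real N * R / A \<ge> 1" using NR A_pos by simp
  have r1: "of_int (round (ms N s)) \<ge> ms N s - 1/2" by (rule of_int_round_ge)
  hence "of_int (round (ms N s)) > (0::real)" using mp half by linarith
  hence rpos: "round (ms N s) \<ge> 1" by simp
  hence yeq: "y = of_int (round (ms N s))" unfolding y_def by simp
  show "y \<ge> 1" using rpos yeq by simp
  show "\<bar>y - ms N s\<bar> \<le> 1/2" using yeq of_int_round_abs_le by simp
  show "y \<ge> ms N s - 1/2" using yeq r1 by simp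
  have "y \<le> ms N s + 1/2" using yeq of_int_round_le by simp
  also have "\<dots> \<le> real N + 1/2" using mp(2) Np_le[OF s, of N] by simp
  finally have "y < real N + 1" by simp
  thus "nat (round (ms N s)) \<le> N" unfolding y_def by linarith
  have "y \<ge> real N * R / (2 * A)" using r1 yeq mp(1) half by (simp add: field_simps) 
  thus "real N * R / y \<le> 2 * A" using \<open>y \<ge> 1\<close> A_pos N R
    by (simp add: field_simps)
qed

end


context mainl begin

lemma Pcons_s_upper:
  assumes s: "s \<le> S" and N: "N > 0" and feas: "real N * R / A \<le> Np N s" and NR: "real N * R \<ge> A"
  defines "y \<equiv> real (nat (round (ms N s)))"
  shows "real N * P_cons_s T sigma2 Pmax alpha gamma Tm Pw S Ra R N s
     \<le> y * qs s (real N * R / y) + real N * Pw s + Lfun Tm Pw s 0 / T"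
proof -
  note np = nas_props[OF s N feas NR]
  have yN: "y \<le> real N" using np(3) unfolding y_def by simp
  define t where "t = (real N - y) * T"
  have t: "t \<ge> 0" using yN T_pos unfolding t_def by simp
  have E: "E_sleep Tm Pw S t \<le> Lfun Tm Pw s 0 + t * Pw s"
    using E_le_L[OF s t] Lfun_lin[of Tm Pw s t] by simp
  have "real N * P_cons_s T sigma2 Pmax alpha gamma Tm Pw S Ra R N s
      = y * (Pw 0 + gamma * Fx (R * real N / y)) + E_sleep Tm Pw S t / T"
    unfolding Pcons_s_eq Let_def y_def[symmetric] t_def using N T_pos by (simp add: field_simps)
  also have "\<dots> \<le> y * (Pw 0 + gamma * Fx (R * real N / y)) + (Lfun Tm Pw s 0 + t * Pw s) / T"
    using E T_pos by (simp add: divide_right_mono)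
  also have "\<dots> = y * qs s (real N * R / y) + real N * Pw s + Lfun Tm Pw s 0 / T"
    unfolding qs_eq[OF s] cs_def t_def using T_pos by (simp add: field_simps)
  finally show ?thesis .
qed

lemma round_inst:
  assumes s: "s \<le> S" and N: "N > 0" and feas: "real N * R / A \<le> Np N s" and NR: "real N * R \<ge> A"
  defines "y \<equiv> real (nat (round (ms N s)))"
  shows "y * qs s (real N * R / y) \<le> ms N s * qs s (real N * R / ms N s) + C0"
proof -
  interpret an: anal "cs s" gamma sg alpha by (rule anal_s[OF s])
  note np = nas_props[OF s N feas NR]
  note mp = ms_props[OF s N feas]
  have K: "real N * R > 0" using N R by simp
  have x2a: "real N * R / ms N s \<le> A" using mp(1) mp(3) A_pos K by (simp add: field_simps)
  have "ms N s \<le> real N" using mp(2) Np_le[OF s, of N] by simp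
  hence x2b: "R \<le> real N * R / ms N s" using mp(3) R N by (simp add: field_simps mult_right_mono)
  have rb: "y * an.q (real N * R / y) \<le> ms N s * an.q (real N * R / ms N s)
      + ((cs s + gamma * an.F A) / 2 + A * an.Dq R (2 * A))"
    by (rule an.round_bound[OF K A_pos R(1)]) (use np mp x2a x2b in \<open>auto simp: y_def\<close>)
  have "cs s \<le> Pw 0" using Pw_nonneg[OF s] unfolding cs_def by simp
  hence "(cs s + gamma * an.F A) / 2 + A * an.Dq R (2 * A) \<le> C0"
    unfolding C0_def an.Dq_def an.F_def Fx_def by simp
  thus ?thesis using rb unfolding qs_def by simp
qed

lemma eq_alloc:
  assumes Na: "Na \<ge> 1" "Na \<le> N" and x: "R * real N / real Na \<le> A"
  defines "p \<equiv> \<lambda>n. if n < Na then sigma2 * (2 powr (R * real N / real Na) - 1) else 0"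
  shows "feasible_alloc sigma2 Pmax R N Na p"
    "P_cons T alpha gamma Tm Pw S N Na p = real Na / real N * (Pw 0 + gamma * Fx (R * real N / real Na))
        + E_sleep Tm Pw S ((real N - real Na) * T) / (real N * T)"
proof -
  define xx where "xx = R * real N / real Na"
  have N: "N > 0" using Na by simp
  have x0: "xx \<ge> 0" unfolding xx_def using R by simp
  have u: "2 powr xx - 1 \<ge> 0" using x0 ge_one_powr_ge_zero by simp
  have "2 powr xx \<le> 2 powr A" using x unfolding xx_def by simp
  hence pm: "sigma2 * (2 powr xx - 1) \<le> Pmax" using A_exp sigma2_pos by (simp add: field_simps)
  have lg: "log 2 (1 + sigma2 * (2 powr xx - 1) / sigma2) = xx" using sigma2_pos by simp
  have "(\<Sum>n<Na. log 2 (1 + p n / sigma2)) = real Na * xx"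
    unfolding p_def xx_def[symmetric] using lg by simp
  also have "\<dots> = R * real N" unfolding xx_def using Na by simp
  finally have sm: "1 / real N * (\<Sum>n<Na. log 2 (1 + p n / sigma2)) = R" using N by simp
  show "feasible_alloc sigma2 Pmax R N Na p"
    unfolding feasible_alloc_def using Na sm pm u sigma2_pos unfolding p_def xx_def[symmetric] by auto
  have "(\<Sum>n<Na. p n powr alpha) = real Na * Fx xx"
    unfolding p_def xx_def[symmetric] Fx_def sg_def using sigma2_pos u by (simp add: powr_mult)
  thus "P_cons T alpha gamma Tm Pw S N Na p = real Na / real N * (Pw 0 + gamma * Fx (R * real N / real Na))
        + E_sleep Tm Pw S ((real N - real Na) * T) / (real N * T)"
    unfolding P_cons_def xx_def[symmetric] using N by (simp add: field_simps)
qed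

lemma alloc_decomp:
  assumes f: "feasible_alloc sigma2 Pmax R N Na p" and N: "N > 0"
  defines "r \<equiv> \<lambda>n. log 2 (1 + p n / sigma2)"
  shows "\<And>n. n < Na \<Longrightarrow> 0 \<le> r n \<and> r n \<le> A"
    "(\<Sum>n<Na. r n) = real N * R"
    "\<And>n. n < Na \<Longrightarrow> p n powr alpha = Fx (r n)"
    "Na \<le> N"
proof -
  have pb: "\<And>n. n < Na \<Longrightarrow> 0 \<le> p n \<and> p n \<le> Pmax" and sm: "1 / real N * (\<Sum>n<Na. r n) = R"
    and NaN: "Na \<le> N"
    using f unfolding feasible_alloc_def r_def by auto
  show "Na \<le> N" by (rule NaN)
  fix n assume n: "n < Na"
  have pos: "1 + p n / sigma2 \<ge> 1" using pb[OF n] sigma2_pos by simp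
  have "1 + p n / sigma2 \<le> 1 + Pmax / sigma2" using pb[OF n] sigma2_pos by (simp add: divide_right_mono)
  hence "r n \<le> log 2 (1 + Pmax / sigma2)" unfolding r_def using pos by simp
  thus "0 \<le> r n \<and> r n \<le> A" unfolding r_def A_def R_max_def using pos by simp
  have "2 powr r n = 1 + p n / sigma2" unfolding r_def using pos by simp
  hence "p n = sigma2 * (2 powr r n - 1)" using sigma2_pos by (simp add: field_simps)
  thus "p n powr alpha = Fx (r n)"
    unfolding Fx_def sg_def using sigma2_pos pb[OF n] ge_one_powr_ge_zero[of 2 "r n"]
    by (simp add: powr_mult) 
next
  show "(\<Sum>n<Na. r n) = real N * R"
    using f N unfolding feasible_alloc_def r_def by (simp add: field_simps)
qed

end


context mainl begin

abbreviation "PS N s \<equiv> P_cons_s T sigma2 Pmax alpha gamma Tm Pw S Ra R N s"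
abbreviation "FM N \<equiv> feasible_modes T sigma2 Pmax Tm S R N"
abbreviation "PC N Na p \<equiv> P_cons T alpha gamma Tm Pw S N Na p"

lemma alloc_mode:
  assumes NaN: "Na \<le> N"
  shows "\<exists>s. s \<le> S \<and> real Na \<le> Np N s \<and>
     E_sleep Tm Pw S ((real N - real Na) * T) = Lfun Tm Pw s ((real N - real Na) * T)"
proof (cases "Na = N")
  case True
  thus ?thesis
    by (intro exI[of _ 0]) (simp add: Np_def N_plus_def Tm0 E_sleep_def Lfun_def)
next
  case False
  define t where "t = (real N - real Na) * T"
  have tp: "t > 0" using False NaN T_pos unfolding t_def by simp
  note mp = md_props[OF tp]
  have "Tm (md t) / T < real N - real Na" using mp(2) T_pos unfolding t_def by (simp add: field_simps)
  hence "real_of_int \<lfloor>Tm (md t) / T\<rfloor> < real N - real Na" by linarith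
  hence "real Na \<le> Np N (md t)" unfolding Np_def N_plus_def by simp
  thus ?thesis using mp(1) E_eq[OF tp] unfolding t_def[symmetric] by blast
qed

lemma dir1:
  assumes N: "N > 0" and NR: "real N * R \<ge> A" and f: "feasible_alloc sigma2 Pmax R N Na p"
  shows "Min (PS N ` FM N) \<le> PC N Na p + C0 / real N"
proof -
  define r where "r = (\<lambda>n. log 2 (1 + p n / sigma2))"
  note dc0 = alloc_decomp[OF f N]
  have dc1: "\<And>n. n < Na \<Longrightarrow> 0 \<le> r n \<and> r n \<le> A" using dc0(1) unfolding r_def by blast
  have dc2: "(\<Sum>n<Na. r n) = real N * R" using dc0(2) unfolding r_def by blast
  have dc3: "\<And>n. n < Na \<Longrightarrow> p n powr alpha = Fx (r n)" using dc0(3) unfolding r_def by blast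
  note dc = dc1 dc2 dc3 dc0(4)
  have "(\<Sum>n<Na. r n) \<le> of_nat (card {..<Na}) * A" using dc(1) by (intro sum_bounded_above) auto
  hence NaA: "real N * R / A \<le> real Na" using dc(2) A_pos by (simp add: field_simps)
  obtain s where s: "s \<le> S" "real Na \<le> Np N s"
    and Es: "E_sleep Tm Pw S ((real N - real Na) * T) = Lfun Tm Pw s ((real N - real Na) * T)"
    using alloc_mode[OF dc(4)] by blast
  have feas: "real N * R / A \<le> Np N s" using NaA s by simp
  have sFM: "s \<in> FM N" using fm_iff s feas by simp
  note mp = ms_props[OF s(1) N feas]
  obtain lam mu where l1: "\<forall>x. 0 \<le> x \<longrightarrow> x \<le> A \<longrightarrow> lam + mu * x \<le> qs s x"
    and l2: "lam + mu * (real N * R / ms N s) = qs s (real N * R / ms N s)"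
    and l3: "lam = 0 \<or> (lam \<le> 0 \<and> ms N s = Np N s)"
    using line_ex[OF s(1) N feas] by blast
  have lm: "lam * ms N s \<le> lam * real Na"
    using l3 s(2) by (auto intro: mult_left_mono_neg)
  have ks: "ms N s * qs s (real N * R / ms N s) \<le> (\<Sum>n<Na. qs s (r n))"
    using key_sum[of A lam mu "qs s" Na r "real N * R" "ms N s", OF _ dc(1) dc(2) mp(3) lm] l1 l2
    by simp
  have sq: "(\<Sum>n<Na. qs s (r n)) = real Na * cs s + gamma * (\<Sum>n<Na. Fx (r n))"
    unfolding qs_eq[OF s(1)] by (simp add: sum.distrib sum_distrib_left)
  have sp: "(\<Sum>n<Na. p n powr alpha) = (\<Sum>n<Na. Fx (r n))" using dc(3) by simp
  have PCeq: "real N * PC N Na p = (\<Sum>n<Na. qs s (r n)) + real N * Pw s + Lfun Tm Pw s 0 / T"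
    unfolding P_cons_def sp Es sq Lfun_lin[of Tm Pw s "(real N - real Na) * T"] using N T_pos
    by (simp add: field_simps cs_def)
  have "real N * PS N s \<le> real N * PC N Na p + C0"
    using Pcons_s_upper[OF s(1) N feas NR] round_inst[OF s(1) N feas NR] ks PCeq by linarith
  hence "PS N s \<le> PC N Na p + C0 / real N" using N by (simp add: field_simps)
  moreover have "Min (PS N ` FM N) \<le> PS N s" using sFM fm_finite by simp
  ultimately show ?thesis by simp
qed

lemma dir2:
  assumes N: "N > 0" and NR: "real N * R \<ge> A" and sF: "s \<in> FM N"
  shows "\<exists>Na p. feasible_alloc sigma2 Pmax R N Na p \<and> PC N Na p \<le> PS N s + C2 / real N"
proof -
  have s: "s \<le> S" and feas: "real N * R / A \<le> Np N s" using sF fm_iff by auto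
  note np = nas_props[OF s N feas NR]
  note mp = ms_props[OF s N feas]
  define Na0 where "Na0 = nat (round (ms N s))"
  define y where "y = real Na0"
  have y1: "y \<ge> 1" using np unfolding y_def Na0_def by simp
  have C2: "C2 \<ge> 0" unfolding C2_def using Pw0_nonneg Fx_nonneg[of "2*A"] A_pos gamma_pos by simp
  have PSe: "PS N s = y / real N * (Pw 0 + gamma * Fx (R * real N / y))
      + E_sleep Tm Pw S ((real N - y) * T) / (real N * T)"
    unfolding Pcons_s_eq Let_def Na0_def[symmetric] y_def ..
  show ?thesis
  proof (cases "R * real N / y \<le> A")
    case True
    note ea = eq_alloc[of Na0, OF _ _ True[unfolded y_def]]
    have "1 \<le> Na0" "Na0 \<le> N" using np unfolding Na0_def by auto
    thus ?thesis using ea PSe C2 N unfolding y_def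
      by (intro exI[of _ Na0] exI) (auto simp: divide_nonneg_pos)
  next
    case False
    hence ylt: "y < real N * R / A" using y1 A_pos by (simp add: field_simps)
    have "y < real N" using ylt mp(1) mp(2) Np_le[OF s, of N] by simp
    hence Na1: "Na0 + 1 \<le> N" unfolding y_def by simp
    have "y + 1 \<ge> real N * R / A" using np(5) mp(1) unfolding y_def Na0_def by simp
    hence xa: "R * real N / real (Na0 + 1) \<le> A"
      using A_pos y1 unfolding y_def by (simp add: field_simps)
    note ea = eq_alloc[of "Na0 + 1", OF _ Na1 xa]
    define x1 where "x1 = R * real N / y"
    define x' where "x' = R * real N / (y + 1)"
    have x'x1: "x' \<le> x1" "0 \<le> x'" unfolding x'_def x1_def using y1 R by (auto simp: frac_le)
    have x1b: "x1 \<le> 2 * A" using np(4) unfolding x1_def y_def Na0_def by (simp add: mult.commute)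
    have Fm: "Fx x' \<le> Fx x1" by (rule Fx_mono[OF x'x1(2) x'x1(1)])
    have Fb: "Fx x1 \<le> Fx (2 * A)" using Fx_mono[OF _ x1b] x'x1 by simp
    have Em: "E_sleep Tm Pw S ((real N - (y + 1)) * T) \<le> E_sleep Tm Pw S ((real N - y) * T)"
      using T_pos by (intro E_mono) simp
    have "real N * PC N (Na0 + 1) (\<lambda>n. if n < Na0 + 1 then sigma2 * (2 powr (R * real N / real (Na0 + 1)) - 1) else 0)
       = (y + 1) * (Pw 0 + gamma * Fx x') + E_sleep Tm Pw S ((real N - (y + 1)) * T) / T"
      using ea(2) N T_pos unfolding y_def x'_def by (simp add: field_simps)
    also have "\<dots> \<le> (y + 1) * (Pw 0 + gamma * Fx x1) + E_sleep Tm Pw S ((real N - y) * T) / T"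
      using Fm Em y1 gamma_pos T_pos by (intro add_mono mult_left_mono divide_right_mono) auto
    also have "\<dots> = real N * PS N s + (Pw 0 + gamma * Fx x1)"
      unfolding PSe x1_def using N T_pos by (simp add: field_simps)
    also have "\<dots> \<le> real N * PS N s + C2" unfolding C2_def using Fb gamma_pos by simp
    finally have "PC N (Na0 + 1) (\<lambda>n. if n < Na0 + 1 then sigma2 * (2 powr (R * real N / real (Na0 + 1)) - 1) else 0)
        \<le> PS N s + C2 / real N" using N by (simp add: field_simps)
    moreover have "feasible_alloc sigma2 Pmax R N (Na0 + 1)
      (\<lambda>n. if n < Na0 + 1 then sigma2 * (2 powr (R * real N / real (Na0 + 1)) - 1) else 0)"
      using ea(1) by simp
    ultimately show ?thesis by blast
  qed
qed

end


context mainl begin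

lemma PC_nonneg: assumes "feasible_alloc sigma2 Pmax R N Na p" shows "PC N Na p \<ge> 0"
proof -
  have "(\<Sum>n<Na. p n powr alpha) \<ge> 0" by (intro sum_nonneg) simp
  moreover have "E_sleep Tm Pw S ((real N - real Na) * T) \<ge> 0" by (rule E_nonneg)
  ultimately show ?thesis unfolding P_cons_def using Pw0_nonneg gamma_pos T_pos by simp
qed

lemma main_result:
  "\<exists>C N0. \<forall>N\<ge>N0.
     \<bar>P_star T sigma2 Pmax alpha gamma Tm Pw S R N - Min (PS N ` FM N)\<bar> \<le> C / real N"
proof (intro exI allI impI)
  fix N :: nat
  assume N0: "N \<ge> nat \<lceil>A / R\<rceil> + 1"
  have N: "N > 0" using N0 by simp
  have "real N \<ge> A / R" using N0 by linarith
  hence NR: "real N * R \<ge> A" using R by (simp add: field_simps)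
  define P where "P = {PC N Na p | Na p. feasible_alloc sigma2 Pmax R N Na p}"
  define M where "M = Min (PS N ` FM N)"
  have C0: "C0 \<ge> 0"
  proof -
    have "gamma * sg * alpha * ln 2 * 2 powr (2 * A) * (2 powr R - 1) powr (alpha - 1) \<ge> 0"
      using gamma_pos sg_pos alpha by simp
    thus ?thesis unfolding C0_def using Pw0_nonneg Fx_nonneg[of A] A_pos gamma_pos by simp
  qed
  have C2: "C2 \<ge> 0" unfolding C2_def using Pw0_nonneg Fx_nonneg[of "2*A"] A_pos gamma_pos by simp
  have ne: "P \<noteq> {}"
  proof -
    have "R * real N / real N \<le> A" using N RA by simp
    from eq_alloc(1)[of N, OF _ _ this] N show ?thesis unfolding P_def by auto
  qed
  have bdd: "bdd_below P" unfolding P_def bdd_below_def using PC_nonneg by blast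
  have low: "M - C0 / real N \<le> Inf P"
  proof (rule cInf_greatest[OF ne])
    fix x assume "x \<in> P"
    then obtain Na p where "feasible_alloc sigma2 Pmax R N Na p" "x = PC N Na p" unfolding P_def by blast
    thus "M - C0 / real N \<le> x" using dir1[OF N NR] unfolding M_def by fastforce
  qed
  have "M \<in> PS N ` FM N" unfolding M_def using fm_finite fm_0 by (intro Min_in) auto
  then obtain s where sF: "s \<in> FM N" and Ms: "M = PS N s" by blast
  obtain Na p where f: "feasible_alloc sigma2 Pmax R N Na p" and pc: "PC N Na p \<le> PS N s + C2 / real N"
    using dir2[OF N NR sF] by blast
  have "Inf P \<le> PC N Na p" by (rule cInf_lower[OF _ bdd]) (use f in \<open>auto simp: P_def\<close>)
  hence up: "Inf P \<le> M + C2 / real N" using pc Ms by simp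
  have "C0 / real N \<le> max C0 C2 / real N" "C2 / real N \<le> max C0 C2 / real N"
    using N by (simp_all add: divide_right_mono)
  hence "\<bar>Inf P - M\<bar> \<le> max C0 C2 / real N" using low up by linarith
  thus "\<bar>P_star T sigma2 Pmax alpha gamma Tm Pw S R N - Min (PS N ` FM N)\<bar> \<le> max C0 C2 / real N"
    unfolding P_star_def P_def[symmetric] M_def[symmetric] .
qed

end

theorem theorem2:
  fixes T sigma2 Pmax alpha gamma R :: real
    and S :: nat and Tm Pw Ra :: "nat \<Rightarrow> real"
  assumes T_pos: "T > 0" and sigma2_pos: "sigma2 > 0" and Pmax_pos: "Pmax > 0"
    and alpha: "0 < alpha" "alpha \<le> 1" and gamma_pos: "gamma > 0"
    and Tm0: "Tm 0 = 0" and Tm1: "S \<ge> 1 \<Longrightarrow> Tm 0 \<le> Tm 1"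
    and Tm_mono: "\<And>s. 1 \<le> s \<Longrightarrow> s < S \<Longrightarrow> Tm s < Tm (Suc s)"
    and Pw_mono: "\<And>s. s < S \<Longrightarrow> Pw (Suc s) \<le> Pw s" and PwS: "Pw S \<ge> 0"
    and Ra_def: "\<And>s. s \<le> S \<Longrightarrow>
        (if Pw 0 = Pw s \<and> alpha = 1 then Ra s = 0
         else Ra s > 0 \<and> (\<forall>x>0. ra_obj sigma2 alpha gamma Pw s (Ra s) \<le> ra_obj sigma2 alpha gamma Pw s x))"
    and R: "0 < R" "R \<le> R_max sigma2 Pmax"
  shows "\<exists>C N0. \<forall>N\<ge>N0.
           \<bar>P_star T sigma2 Pmax alpha gamma Tm Pw S R N
             - Min ((\<lambda>s. P_cons_s T sigma2 Pmax alpha gamma Tm Pw S Ra R N s)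
                      ` feasible_modes T sigma2 Pmax Tm S R N)\<bar> \<le> C / real N"
proof -
  interpret mainl Tm Pw S T sigma2 Pmax alpha gamma R Ra
    by (unfold_locales) (use assms in auto)
  show ?thesis by (rule main_result)
qed


end
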